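(* Consider the fixed cost inverse fractional knapsack problem under the $l_1$-norm (defined in the context). If it has an optimal solution, then there exists an optimal solution $(u,v)$ with $v_i=0$ for all $i\in I^1$ and $u_i=0$ for all $i\in I^0$, i.e., profits are only increased for items with $x^*_i=1$ and only reduced for items with $x^*_i=0$.
   Context: Given positive integers $p_i,c_i$ ($i=1,\dots,n$), a budget $b$, and a vector $x^*\in\{0,1\}^n$ with $\sum_{i=1}^n c_i x^*_i=b$. Let $I^1=\{i:x^*_i=1\}$ and $I^0=\{i:x^*_i=0\}$. Given nonnegative integer bounds $\bar u_i,\bar v_i$ and nonnegative weights $w_i$. A feasible modification is $(u,v)$ with $u_i\in[0,\bar u_i]\cap\mathbb Z$, $v_i\in[0,\bar v_i]\cap\mathbb Z$, giving modified profits $\tilde p_i=p_i+u_i-v_i$; costs $c_i$ are not modified. The fixed cost inverse fractional knapsack problem asks for a feasible modification such that $x^*$ is an optimal solution of $\max\{\sum_i\tilde p_i x_i:\sum_i c_ix_i\le b,\ x_i\in[0,1]\}$ and $\sum_{i=1}^n w_i(u_i+v_i)$ is minimal. *)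

theory Defs
  imports "HOL-Analysis.Analysis"
begin

text \<open>Items are indexed by {..<n}. Vectors are functions on nat; only indices below n matter.\<close>

definition frac_feasible :: "nat \<Rightarrow> (nat \<Rightarrow> int) \<Rightarrow> int \<Rightarrow> (nat \<Rightarrow> real) \<Rightarrow> bool" where
  "frac_feasible n c b x \<longleftrightarrow>
     (\<forall>i<n. 0 \<le> x i \<and> x i \<le> 1) \<and> (\<Sum>i<n. real_of_int (c i) * x i) \<le> real_of_int b"

definition frac_knap_optimal :: "nat \<Rightarrow> (nat \<Rightarrow> int) \<Rightarrow> (nat \<Rightarrow> int) \<Rightarrow> int \<Rightarrow> (nat \<Rightarrow> real) \<Rightarrow> bool" where
  "frac_knap_optimal n p c b x \<longleftrightarrow>
     frac_feasible n c b x \<and>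
     (\<forall>y. frac_feasible n c b y \<longrightarrow>
        (\<Sum>i<n. real_of_int (p i) * y i) \<le> (\<Sum>i<n. real_of_int (p i) * x i))"

definition feasible_modification :: "nat \<Rightarrow> (nat \<Rightarrow> int) \<Rightarrow> (nat \<Rightarrow> int) \<Rightarrow> (nat \<Rightarrow> int) \<Rightarrow> (nat \<Rightarrow> int) \<Rightarrow> bool" where
  "feasible_modification n ubar vbar u v \<longleftrightarrow>
     (\<forall>i<n. 0 \<le> u i \<and> u i \<le> ubar i \<and> 0 \<le> v i \<and> v i \<le> vbar i)"

definition inv_admissible ::
  "nat \<Rightarrow> (nat \<Rightarrow> int) \<Rightarrow> (nat \<Rightarrow> int) \<Rightarrow> int \<Rightarrow> (nat \<Rightarrow> int) \<Rightarrow> (nat \<Rightarrow> int) \<Rightarrow> (nat \<Rightarrow> int)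
   \<Rightarrow> (nat \<Rightarrow> int) \<Rightarrow> (nat \<Rightarrow> int) \<Rightarrow> bool" where
  "inv_admissible n p c b xs ubar vbar u v \<longleftrightarrow>
     feasible_modification n ubar vbar u v \<and>
     frac_knap_optimal n (\<lambda>i. p i + u i - v i) c b (\<lambda>i. real_of_int (xs i))"

definition l1_cost :: "nat \<Rightarrow> (nat \<Rightarrow> real) \<Rightarrow> (nat \<Rightarrow> int) \<Rightarrow> (nat \<Rightarrow> int) \<Rightarrow> real" where
  "l1_cost n w u v = (\<Sum>i<n. w i * real_of_int (u i + v i))"

definition inv_optimal ::
  "nat \<Rightarrow> (nat \<Rightarrow> int) \<Rightarrow> (nat \<Rightarrow> int) \<Rightarrow> int \<Rightarrow> (nat \<Rightarrow> int) \<Rightarrow> (nat \<Rightarrow> int) \<Rightarrow> (nat \<Rightarrow> int)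
   \<Rightarrow> (nat \<Rightarrow> real) \<Rightarrow> (nat \<Rightarrow> int) \<Rightarrow> (nat \<Rightarrow> int) \<Rightarrow> bool" where
  "inv_optimal n p c b xs ubar vbar w u v \<longleftrightarrow>
     inv_admissible n p c b xs ubar vbar u v \<and>
     (\<forall>u' v'. inv_admissible n p c b xs ubar vbar u' v' \<longrightarrow> l1_cost n w u v \<le> l1_cost n w u' v')"

end

theory Submission
  imports Defs
begin

theorem mainTheorem2:
  fixes n :: nat and p c ubar vbar xs :: "nat \<Rightarrow> int" and b :: int and w :: "nat \<Rightarrow> real"
  assumes p_pos: "\<forall>i<n. p i > 0"
    and c_pos: "\<forall>i<n. c i > 0"
    and xs_bin: "\<forall>i<n. xs i = 0 \<or> xs i = 1"
    and xs_budget: "(\<Sum>i<n. c i * xs i) = b"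
    and ubar_nn: "\<forall>i<n. ubar i \<ge> 0"
    and vbar_nn: "\<forall>i<n. vbar i \<ge> 0"
    and w_nn: "\<forall>i<n. w i \<ge> 0"
    and ex_opt: "\<exists>u v. inv_optimal n p c b xs ubar vbar w u v"
  shows "\<exists>u v. inv_optimal n p c b xs ubar vbar w u v \<and>
           (\<forall>i<n. xs i = 1 \<longrightarrow> v i = 0) \<and> (\<forall>i<n. xs i = 0 \<longrightarrow> u i = 0)"
proof -
  obtain u v where opt: "inv_optimal n p c b xs ubar vbar w u v" using ex_opt by blast
  define u' where "u' = (\<lambda>i. if xs i = 1 then u i else 0)"
  define v' where "v' = (\<lambda>i. if xs i = 1 then 0 else v i)"
  have adm: "inv_admissible n p c b xs ubar vbar u v" using opt unfolding inv_optimal_def by blast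
  hence fm: "feasible_modification n ubar vbar u v"
    and ko: "frac_knap_optimal n (\<lambda>i. p i + u i - v i) c b (\<lambda>i. real_of_int (xs i))"
    unfolding inv_admissible_def by auto
  have fm': "feasible_modification n ubar vbar u' v'"
    using fm vbar_nn ubar_nn unfolding feasible_modification_def u'_def v'_def by auto
  let ?X = "\<lambda>i. real_of_int (xs i)"
  define d where "d = (\<lambda>i. real_of_int (p i + u' i - v' i) - real_of_int (p i + u i - v i))"
  have feasX: "frac_feasible n c b ?X" using ko unfolding frac_knap_optimal_def by blast
  have ko': "frac_knap_optimal n (\<lambda>i. p i + u' i - v' i) c b ?X"
    unfolding frac_knap_optimal_def
  proof (intro conjI allI impI)
    show "frac_feasible n c b ?X" by (rule feasX)
    fix y assume fy: "frac_feasible n c b y"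
    have le1: "(\<Sum>i<n. real_of_int (p i + u i - v i) * y i) \<le> (\<Sum>i<n. real_of_int (p i + u i - v i) * ?X i)"
      using ko fy unfolding frac_knap_optimal_def by blast
    have le2: "(\<Sum>i<n. d i * y i) \<le> (\<Sum>i<n. d i * ?X i)"
    proof (rule sum_mono)
      fix i assume "i \<in> {..<n}"
      hence i: "i < n" by simp
      have y01: "0 \<le> y i" "y i \<le> 1" using fy i unfolding frac_feasible_def by auto
      have uv: "0 \<le> u i" "0 \<le> v i" using fm i unfolding feasible_modification_def by auto
      show "d i * y i \<le> d i * ?X i"
      proof (cases "xs i = 1")
        case True
        then have "d i = real_of_int (v i)" unfolding d_def u'_def v'_def by simp
        then show ?thesis using True y01 uv by (simp add: mult_left_le)
      next
        case False
        then have "xs i = 0" using xs_bin i by auto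
        moreover have "d i = - real_of_int (u i)" using False unfolding d_def u'_def v'_def by simp
        ultimately show ?thesis using y01 uv by simp
      qed
    qed
    have eq: "\<And>z. (\<Sum>i<n. real_of_int (p i + u' i - v' i) * z i) =
       (\<Sum>i<n. real_of_int (p i + u i - v i) * z i) + (\<Sum>i<n. d i * z i)"
      unfolding d_def by (simp add: sum.distrib[symmetric] algebra_simps)
    show "(\<Sum>i<n. real_of_int (p i + u' i - v' i) * y i) \<le> (\<Sum>i<n. real_of_int (p i + u' i - v' i) * ?X i)"
      using le1 le2 eq[of y] eq[of ?X] by linarith
  qed
  have adm': "inv_admissible n p c b xs ubar vbar u' v'"
    unfolding inv_admissible_def using fm' ko' by blast
  have cost: "l1_cost n w u' v' \<le> l1_cost n w u v"
    unfolding l1_cost_def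
  proof (rule sum_mono)
    fix i assume "i \<in> {..<n}"
    hence i: "i < n" by simp
    have uv: "0 \<le> u i" "0 \<le> v i" using fm i unfolding feasible_modification_def by auto
    have "real_of_int (u' i + v' i) \<le> real_of_int (u i + v i)"
      using uv unfolding u'_def v'_def by auto
    then show "w i * real_of_int (u' i + v' i) \<le> w i * real_of_int (u i + v i)"
      using w_nn i by (simp add: mult_left_mono)
  qed
  have "inv_optimal n p c b xs ubar vbar w u' v'"
    unfolding inv_optimal_def
  proof (intro conjI allI impI)
    show "inv_admissible n p c b xs ubar vbar u' v'" by (rule adm')
    fix a bb assume "inv_admissible n p c b xs ubar vbar a bb"
    then have "l1_cost n w u v \<le> l1_cost n w a bb" using opt unfolding inv_optimal_def by blast
    then show "l1_cost n w u' v' \<le> l1_cost n w a bb" using cost by linarith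
  qed
  moreover have "(\<forall>i<n. xs i = 1 \<longrightarrow> v' i = 0) \<and> (\<forall>i<n. xs i = 0 \<longrightarrow> u' i = 0)"
    unfolding u'_def v'_def by auto
  ultimately show ?thesis by blast
qed

end
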